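(* Let $0<r<1$. For every $w\in\overline{\mathbb{A}}_r$, the $2\times 2$ matrix $$T_w=\begin{pmatrix} w & (1-|w|^2)(|w|^2-r^2)\\ 0 & w\end{pmatrix}$$ is an $\mathbb{A}_r$-contraction; moreover, for $w\in\partial\mathbb{A}_r$ it is an $\mathbb{A}_r$-unitary. In addition, for every $w\in\mathbb{A}_r$, $$\hat K_r(\overline{w},w)=\sum_{n=-\infty}^{\infty}\frac{|w|^{2n}}{1+r^{2n}}\le\frac{1}{(1-|w|^2)(|w|^2-r^2)}.$$
   Context: $\mathbb{A}_r=\{z: r<|z|<1\}$, $\partial\mathbb{A}_r=\mathbb{T}\cup r\mathbb{T}$. An $\mathbb{A}_r$-contraction is an operator (here a matrix) $T$ with $\sigma(T)\subseteq\overline{\mathbb{A}}_r$ and $\|f(T)\|\le\sup_{\overline{\mathbb{A}}_r}|f|$ for every rational function $f$ with poles off $\overline{\mathbb{A}}_r$. An $\mathbb{A}_r$-unitary is a normal operator with spectrum in $\partial\mathbb{A}_r$. $\hat K_r(z,w)=\sum_{n\in\mathbb{Z}}\frac{(z\overline{w})^n}{1+r^{2n}}$ is the reproducing kernel of the Hardy space $H^2(\partial\mathbb{A}_r)$ with inner product $\langle f,g\rangle=\frac{1}{2\pi}\int_0^{2\pi}f(e^{it})\overline{g(e^{it})}dt+\frac{1}{2\pi}\int_0^{2\pi}f(re^{it})\overline{g(re^{it})}dt$. *)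

theory Defs
  imports "HOL-Analysis.Analysis" "HOL-Computational_Algebra.Polynomial"
begin

definition annulus :: "real \<Rightarrow> complex set" where
  "annulus r = {z. r < cmod z \<and> cmod z < 1}"
definition cl_annulus :: "real \<Rightarrow> complex set" where
  "cl_annulus r = {z. r \<le> cmod z \<and> cmod z \<le> 1}"
definition bd_annulus :: "real \<Rightarrow> complex set" where
  "bd_annulus r = {z. cmod z = 1 \<or> cmod z = r}"

primrec mpow :: "complex^'n^'n \<Rightarrow> nat \<Rightarrow> complex^'n^'n" where
  "mpow A 0 = mat 1"
| "mpow A (Suc k) = A ** mpow A k"

definition poly_mat :: "complex poly \<Rightarrow> complex^'n^'n \<Rightarrow> complex^'n^'n" where
  "poly_mat p A = (\<Sum>i\<le>degree p. mat (coeff p i) ** mpow A i)"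

definition op_norm :: "complex^'n^'n \<Rightarrow> real" where
  "op_norm A = onorm (\<lambda>x. A *v x)"

definition mspectrum :: "complex^'n^'n \<Rightarrow> complex set" where
  "mspectrum A = {c. \<not> invertible (A - mat c)}"

definition madjoint :: "complex^'n^'n \<Rightarrow> complex^'n^'n" where
  "madjoint A = (\<chi> i j. cnj (A $ j $ i))"

text \<open>A rational function f = p/q with no poles on the closed annulus is represented
  by polynomials p, q with q zero-free on the closed annulus; f(T) = p(T) q(T)^{-1}.\<close>
definition annulus_contraction :: "real \<Rightarrow> complex^'n^'n \<Rightarrow> bool" where
  "annulus_contraction r T \<longleftrightarrow>
     mspectrum T \<subseteq> cl_annulus r \<and>
     (\<forall>p q. (\<forall>z\<in>cl_annulus r. poly q z \<noteq> 0) \<longrightarrow>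
        op_norm (poly_mat p T ** matrix_inv (poly_mat q T))
          \<le> (SUP z\<in>cl_annulus r. cmod (poly p z / poly q z)))"

definition annulus_unitary :: "real \<Rightarrow> complex^'n^'n \<Rightarrow> bool" where
  "annulus_unitary r T \<longleftrightarrow>
     T ** madjoint T = madjoint T ** T \<and> mspectrum T \<subseteq> bd_annulus r"

definition Tw :: "real \<Rightarrow> complex \<Rightarrow> complex^2^2" where
  "Tw r w = vector [vector [w, complex_of_real ((1 - (cmod w)\<^sup>2) * ((cmod w)\<^sup>2 - r\<^sup>2))],
                    vector [0, w]]"

end

theory Submission
  imports Defs "HOL-Complex_Analysis.Riemann_Mapping"
begin


lemma moeb_deriv:
  assumes "1 - cnj w * z \<noteq> 0"
  shows "(Moebius_function 0 w has_field_derivative (1 - cnj w * w)/(1 - cnj w * z)^2) (at z)"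
proof -
  have "((\<lambda>z. (z - w) / (1 - cnj w * z)) has_field_derivative
     ((1 * (1 - cnj w * z) - (z - w) * (0 - cnj w * 1)) / ((1 - cnj w * z) * (1 - cnj w * z)))) (at z)"
    by (intro DERIV_divide derivative_eq_intros assms) auto
  moreover have "((1 * (1 - cnj w * z) - (z - w) * (0 - cnj w * 1)) / ((1 - cnj w * z) * (1 - cnj w * z)))
     = (1 - cnj w * w)/(1 - cnj w * z)^2"
    by (simp add: power2_eq_square algebra_simps)
  ultimately show ?thesis by (simp add: Moebius_function_simple[abs_def] Moebius_function_def)
qed

lemma schwarz_pick:
  fixes g :: "complex \<Rightarrow> complex"
  assumes holg: "g holomorphic_on ball 0 1" and lt: "\<And>z. norm z < 1 \<Longrightarrow> norm (g z) < 1"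
    and a: "norm a < 1" and D: "(g has_field_derivative D) (at a)"
  shows "norm D * (1 - (norm a)^2) \<le> 1 - (norm (g a))^2"
proof -
  define b where "b = g a"
  have b: "norm b < 1" using lt a by (simp add: b_def)
  define m1 where "m1 = Moebius_function 0 (-a)"
  define m2 where "m2 = Moebius_function 0 b"
  define h where "h = m2 \<circ> (g \<circ> m1)"
  have m1b: "norm (m1 z) < 1" if "norm z < 1" for z
    using Moebius_function_norm_lt_1[of "-a" z 0] a that by (simp add: m1_def)
  have holh: "h holomorphic_on ball 0 1"
    unfolding h_def
  proof (rule holomorphic_on_compose_gen[where t="ball 0 1"])
    show "g \<circ> m1 holomorphic_on ball 0 1"
      by (rule holomorphic_on_compose_gen[where t="ball 0 1"])
        (use holg m1b a Moebius_function_holomorphic[of "-a" 0] in \<open>auto simp: m1_def\<close>)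
    show "m2 holomorphic_on ball 0 1" using Moebius_function_holomorphic[OF b] m2_def by simp
    show "(g \<circ> m1) ` ball 0 1 \<subseteq> ball 0 1" using m1b lt by auto
  qed
  have m10: "m1 0 = a" by (simp add: m1_def Moebius_function_of_zero)
  have h0: "h 0 = 0" by (simp add: h_def m10 m2_def b_def Moebius_function_eq_zero)
  have hlt: "norm (h z) < 1" if "norm z < 1" for z
    using Moebius_function_norm_lt_1[OF b, of "g (m1 z)" 0] lt m1b that by (simp add: h_def m2_def)
  have "norm (deriv h 0) \<le> 1"
    using Schwarz_Lemma(2)[OF holh h0 hlt, of 0] by simp
  have nz1: "1 - cnj (-a) * 0 \<noteq> 0" by simp
  have nzb: "1 - cnj b * b \<noteq> 0"
  proof
    assume "1 - cnj b * b = 0"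
    then have "cnj b * b = 1" by simp
    then have "norm (cnj b * b) = 1" by simp
    then have "norm b * norm b = 1" by (simp add: norm_mult)
    moreover have "norm b * norm b < 1" using b by (simp add: abs_square_less_1 flip: power2_eq_square)
    ultimately show False by simp
  qed
  have "(h has_field_derivative
     ((1 - cnj b * b)/(1 - cnj b * b)^2) * (D * ((1 - cnj (-a) * (-a))/(1 - cnj (-a) * 0)^2))) (at 0)"
  proof -
    have d1: "(m1 has_field_derivative ((1 - cnj (-a) * (-a))/(1 - cnj (-a) * 0)^2)) (at 0)"
      using moeb_deriv[OF nz1] by (simp add: m1_def)
    have d2: "(g has_field_derivative D) (at (m1 0))" using D m10 by simp
    have d3: "(m2 has_field_derivative ((1 - cnj b * b)/(1 - cnj b * b)^2)) (at ((g \<circ> m1) 0))"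
      using moeb_deriv[OF nzb] by (simp add: m2_def m10 b_def[symmetric])
    show ?thesis unfolding h_def by (rule DERIV_chain[OF d3 DERIV_chain[OF d2 d1]])
  qed
  moreover have "((1 - cnj b * b)/(1 - cnj b * b)^2) * (D * ((1 - cnj (-a) * (-a))/(1 - cnj (-a) * 0)^2))
     = D * (1 - cnj a * a) / (1 - cnj b * b)"
    using nzb by (simp add: power2_eq_square)
  ultimately have dh: "deriv h 0 = D * (1 - cnj a * a) / (1 - cnj b * b)"
    by (metis DERIV_imp_deriv)
  have ca: "cnj a * a = of_real ((norm a)^2)" by (simp add: mult.commute flip: complex_norm_square)
  have cb: "cnj b * b = of_real ((norm b)^2)" by (simp add: mult.commute flip: complex_norm_square)
  have pa: "0 < 1 - (norm a)^2" using a by (simp add: abs_square_less_1)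
  have pb: "0 < 1 - (norm b)^2" using b by (simp add: abs_square_less_1)
  have "norm (deriv h 0) = norm D * (1 - (norm a)^2) / (1 - (norm b)^2)"
  proof -
    have e: "deriv h 0 = D * of_real (1 - (norm a)^2) / of_real (1 - (norm b)^2)"
      unfolding dh ca cb by simp
    show ?thesis unfolding e norm_divide norm_mult norm_of_real using pa pb by simp
  qed
  with \<open>norm (deriv h 0) \<le> 1\<close> pb show ?thesis by (simp add: b_def divide_le_eq)
qed


definition ut :: "complex \<Rightarrow> complex \<Rightarrow> complex^2^2" where
  "ut a b = (\<chi> i j. if i = j then a else if i = 1 \<and> j = 2 then b else 0)"
lemma one_neq_two_2: "(1::2) \<noteq> 2" by simp

lemma ut_nth [simp]: "ut a b $ 1 $ 1 = a" "ut a b $ 1 $ 2 = b" "ut a b $ 2 $ 1 = 0" "ut a b $ 2 $ 2 = a"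
  by (simp_all add: ut_def)

lemma mat_eq_iff2: "(A::'a^2^2) = B \<longleftrightarrow> A$1$1 = B$1$1 \<and> A$1$2 = B$1$2 \<and> A$2$1 = B$2$1 \<and> A$2$2 = B$2$2"
  by (auto simp: vec_eq_iff forall_2)

lemma ut_mult: "ut a b ** ut c d = ut (a*c) (a*d + b*c)"
  by (simp add: mat_eq_iff2 matrix_matrix_mult_def sum_2)

lemma mat_ut: "(mat k :: complex^2^2) = ut k 0"
  by (simp add: mat_eq_iff2 mat_def)

lemma ut_sum: "(\<Sum>i\<in>S. ut (f i) (g i)) = ut (sum f S) (sum g S)"
  by (simp add: mat_eq_iff2 sum_component)

lemma ut_sub: "ut a b - ut c d = ut (a - c) (b - d)"
  by (simp add: mat_eq_iff2)

lemma Tw_ut: "Tw r w = ut w (of_real ((1 - (cmod w)\<^sup>2) * ((cmod w)\<^sup>2 - r\<^sup>2)))"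
  by (simp add: mat_eq_iff2 Tw_def)

lemma mpow_ut: "mpow (ut w C) i = ut (w^i) (C * of_nat i * w^(i-1))"
proof (induction i)
  case 0 then show ?case by (simp add: mat_ut)
next
  case (Suc i)
  then show ?case
    by (cases i) (simp_all add: ut_mult algebra_simps)
qed

definition pd :: "complex poly \<Rightarrow> complex \<Rightarrow> complex" where
  "pd p w = (\<Sum>i\<le>degree p. coeff p i * (of_nat i * w^(i-1)))"

lemma pd_deriv: "(poly p has_field_derivative pd p w) (at w)"
proof -
  have "((\<lambda>z. \<Sum>i\<le>degree p. coeff p i * z^i) has_field_derivative pd p w) (at w)"
    unfolding pd_def
    by (intro DERIV_sum DERIV_cmult) (use DERIV_power[OF DERIV_ident] in simp)
  moreover have "poly p = (\<lambda>z. \<Sum>i\<le>degree p. coeff p i * z^i)"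
    by (rule ext) (rule poly_altdef)
  ultimately show ?thesis by (simp only:)
qed

lemma poly_mat_ut: "poly_mat p (ut w C) = ut (poly p w) (C * pd p w)"
proof -
  have "poly_mat p (ut w C) = (\<Sum>i\<le>degree p. ut (coeff p i * w^i) (C * (coeff p i * (of_nat i * w^(i-1)))))"
    unfolding poly_mat_def mpow_ut mat_ut ut_mult by (intro sum.cong refl) (simp add: mult_ac)
  also have "\<dots> = ut (\<Sum>i\<le>degree p. coeff p i * w^i) (\<Sum>i\<le>degree p. C * (coeff p i * (of_nat i * w^(i-1))))"
    by (rule ut_sum)
  also have "\<dots> = ut (poly p w) (C * pd p w)"
    by (simp only: poly_altdef pd_def sum_distrib_left)
  finally show ?thesis .
qed

lemma ut_inv:
  assumes "a \<noteq> 0"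
  shows "matrix_inv (ut a b) = ut (1/a) (- b / a^2)"
proof -
  have e1: "ut a b ** ut (1/a) (- b / a^2) = mat 1" and e2: "ut (1/a) (- b / a^2) ** ut a b = mat 1"
    using assms by (simp_all add: ut_mult mat_ut power2_eq_square field_simps)
  have u: "ut a b ** X = mat 1 \<and> X ** ut a b = mat 1 \<Longrightarrow> X = ut (1/a) (- b / a^2)" for X
  proof -
    assume "ut a b ** X = mat 1 \<and> X ** ut a b = mat 1"
    then have "ut (1/a) (- b / a^2) ** (ut a b ** X) = ut (1/a) (- b / a^2)" by (simp add: matrix_mul_rid)
    then show ?thesis by (metis matrix_mul_assoc e2 matrix_mul_lid)
  qed
  show ?thesis unfolding matrix_inv_def
    by (rule some_equality) (use e1 e2 u in blast)+
qed

lemma ut_invertible_iff: "invertible (ut a b) \<longleftrightarrow> a \<noteq> 0"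
  unfolding invertible_det_nz det_2 by simp

lemma mspectrum_ut: "mspectrum (ut w C) \<subseteq> {w}"
proof
  fix c assume "c \<in> mspectrum (ut w C)"
  then have "\<not> invertible (ut (w - c) C)"
    unfolding mspectrum_def mat_ut ut_sub by simp
  then have "w - c = 0" unfolding ut_invertible_iff by blast
  then show "c \<in> {w}" by simp
qed



lemma key_real:
  fixes \<alpha> \<beta> M X1 X2 :: real
  assumes "0 \<le> \<alpha>" "0 \<le> \<beta>" "0 \<le> X1" "0 \<le> X2" "\<alpha> \<le> M" "\<beta> * M \<le> M^2 - \<alpha>^2" "0 < M \<or> \<beta> = 0"
  shows "(\<alpha>*X1 + \<beta>*X2)^2 + (\<alpha>*X2)^2 \<le> M^2 * (X1^2 + X2^2)"
proof (cases "\<beta> = 0")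
  case True
  have "\<alpha>^2 \<le> M^2" using assms by (simp add: power_mono)
  then show ?thesis using True
    by (simp add: power_mult_distrib algebra_simps)
       (intro add_mono; metis mult.commute mult_left_mono zero_le_power2)
next
  case False
  then have M: "0 < M" using assms by auto
  define d where "d = M^2 - \<alpha>^2"
  have bM: "0 \<le> \<beta> * M" using assms M by simp
  have dge: "\<beta> * M \<le> d" using assms d_def by simp
  have d0: "0 < d"
  proof -
    have "0 < \<beta> * M" using False assms M by simp
    then show ?thesis using dge by simp
  qed
  have sq: "(\<beta> * M)^2 \<le> d^2" using dge bM by (simp add: power_mono)
  have id: "d * (M^2*(X1^2+X2^2) - ((\<alpha>*X1+\<beta>*X2)^2 + (\<alpha>*X2)^2))
      = (d*X1 - \<alpha>*\<beta>*X2)^2 + (d^2 - (\<beta>*M)^2)*X2^2"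
    unfolding d_def power2_eq_square by (simp add: algebra_simps)
  have "0 \<le> (d*X1 - \<alpha>*\<beta>*X2)^2 + (d^2 - (\<beta>*M)^2)*X2^2"
    using sq by (intro add_nonneg_nonneg) auto
  then have "0 \<le> d * (M^2*(X1^2+X2^2) - ((\<alpha>*X1+\<beta>*X2)^2 + (\<alpha>*X2)^2))" using id by simp
  then have "0 \<le> M^2*(X1^2+X2^2) - ((\<alpha>*X1+\<beta>*X2)^2 + (\<alpha>*X2)^2)"
    using d0 by (simp add: zero_le_mult_iff)
  then show ?thesis by simp
qed

lemma norm_vec2: "norm (v::complex^2) = sqrt ((norm (v$1))^2 + (norm (v$2))^2)"
  by (simp add: norm_vec_def L2_set_def sum_2)

lemma ut_mv: "(ut a b *v x) $ 1 = a * x$1 + b * x$2" "(ut a b *v x) $ 2 = a * x$2"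
  by (simp_all add: matrix_vector_mult_def sum_2)

lemma ut_onorm:
  assumes "norm a \<le> M" "norm b * M \<le> M^2 - (norm a)^2" "0 < M \<or> b = 0"
  shows "op_norm (ut a b) \<le> M"
  unfolding op_norm_def
proof (rule onorm_le)
  fix x :: "complex^2"
  have M0: "0 \<le> M" using assms(1) norm_ge_zero order_trans by blast
  have t: "norm (a * x$1 + b * x$2) \<le> norm a * norm (x$1) + norm b * norm (x$2)"
    by (metis norm_mult norm_triangle_ineq)
  have t2: "(norm (a * x$1 + b * x$2))^2 \<le> (norm a * norm (x$1) + norm b * norm (x$2))^2"
    using t by (simp add: power_mono)
  have k: "(norm a * norm (x$1) + norm b * norm (x$2))^2 + (norm a * norm (x$2))^2
       \<le> M^2 * ((norm (x$1))^2 + (norm (x$2))^2)"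
    by (rule key_real) (use assms in auto)
  have "norm (ut a b *v x) = sqrt ((norm (a * x$1 + b * x$2))^2 + (norm (a * x$2))^2)"
    by (simp add: norm_vec2 ut_mv)
  also have "\<dots> \<le> sqrt (M^2 * ((norm (x$1))^2 + (norm (x$2))^2))"
  proof (rule real_sqrt_le_mono)
    have "(norm (a * x$2))^2 = (norm a * norm (x$2))^2" by (simp add: norm_mult)
    then show "(norm (a * x$1 + b * x$2))^2 + (norm (a * x$2))^2 \<le> M^2 * ((norm (x$1))^2 + (norm (x$2))^2)"
      using t2 k by linarith
  qed
  also have "\<dots> = M * norm x"
    using M0 by (simp add: norm_vec2 real_sqrt_mult)
  finally show "norm (ut a b *v x) \<le> M * norm x" .
qed



lemma poly_hol_UNIV: "poly p holomorphic_on UNIV"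
  unfolding holomorphic_on_def field_differentiable_def
  using pd_deriv has_field_derivative_at_within by blast

lemma poly_hol_comp: "h holomorphic_on A \<Longrightarrow> (\<lambda>z. poly p (h z)) holomorphic_on A"
  using holomorphic_on_compose[of h A "poly p"] holomorphic_on_subset[OF poly_hol_UNIV]
  by (simp add: o_def)

lemma limit_le:
  fixes A B M :: real
  assumes "\<And>e. 0 < e \<Longrightarrow> A * (M + e) \<le> (M + e)^2 - B"
  shows "A * M \<le> M^2 - B"
proof -
  have l1: "((\<lambda>e. A * (M + e)) \<longlongrightarrow> A * (M + 0)) (at_right 0)"
    by (intro tendsto_intros)
  have l2: "((\<lambda>e. (M + e)^2 - B) \<longlongrightarrow> (M + 0)^2 - B) (at_right 0)"
    by (intro tendsto_intros)
  have ev: "eventually (\<lambda>e. A * (M + e) \<le> (M + e)^2 - B) (at_right (0::real))"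
    using assms eventually_at_right_less[of 0] by (auto elim: eventually_mono)
  show ?thesis using tendsto_le[OF trivial_limit_at_right_real l2 l1 ev] by simp
qed

lemma interior_est:
  fixes p q :: "complex poly" and r M :: real and w F :: complex
  assumes r: "0 < r" "r < 1" and w: "w \<in> annulus r"
   and q: "\<forall>z\<in>annulus r. poly q z \<noteq> 0"
   and bnd: "\<forall>z\<in>annulus r. norm (poly p z / poly q z) \<le> M"
   and dF: "((\<lambda>z. poly p z / poly q z) has_field_derivative F) (at w)"
  shows "norm F * ((1 - (cmod w)^2) * ((cmod w)^2 - r^2)) * M \<le> M^2 - (norm (poly p w / poly q w))^2"
proof -
  define f where "f = (\<lambda>z. poly p z / poly q z)"
  define s where "s = cmod w"
  define m where "m = (1 + r) / 2"
  define \<rho> where "\<rho> = (1 - r) / 2"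
  define cc where "cc = of_real (m / s) * w"
  have s: "r < s" "s < 1" using w by (auto simp: annulus_def s_def)
  have s0: "0 < s" using s r by simp
  have \<rho>0: "0 < \<rho>" using r by (simp add: \<rho>_def)
  have ncc: "norm cc = m"
  proof -
    have "norm cc = norm (of_real (m/s) :: complex) * norm w" by (simp only: cc_def norm_mult)
    also have "\<dots> = \<bar>m/s\<bar> * s" by (simp only: norm_of_real s_def)
    also have "\<dots> = m" using s0 r by (simp add: m_def)
    finally show ?thesis .
  qed
  have inA: "cc + of_real \<rho> * u \<in> annulus r" if "norm u < 1" for u
  proof -
    have nv: "norm (of_real \<rho> * u) < \<rho>" using that \<rho>0 by (simp add: norm_mult)
    have "norm (cc + of_real \<rho> * u) \<le> norm cc + norm (of_real \<rho> * u)" by (rule norm_triangle_ineq)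
    moreover have "norm cc - norm (of_real \<rho> * u) \<le> norm (cc + of_real \<rho> * u)"
      by (rule norm_diff_ineq)
    moreover have "m + \<rho> = 1" "m - \<rho> = r" by (simp_all add: m_def \<rho>_def field_simps)
    ultimately show ?thesis using nv ncc unfolding annulus_def mem_Collect_eq by linarith
  qed
  define a where "a = (w - cc) / of_real \<rho>"
  have wcc: "w - cc = of_real (1 - m/s) * w" by (simp add: cc_def algebra_simps)
  have nwcc: "norm (w - cc) = \<bar>s - m\<bar>"
  proof -
    have "norm (w - cc) = norm (of_real (1 - m/s) :: complex) * norm w" by (simp only: wcc norm_mult)
    also have "\<dots> = \<bar>1 - m/s\<bar> * s" by (simp only: norm_of_real s_def)
    also have "\<dots> = \<bar>(1 - m/s) * s\<bar>" using s0 by (simp add: abs_mult)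
    also have "(1 - m/s) * s = s - m" using s0 by (simp add: field_simps)
    finally show ?thesis .
  qed
  have na: "norm a = \<bar>s - m\<bar> / \<rho>" using \<rho>0 by (simp add: a_def norm_divide nwcc)
  have sm: "\<bar>s - m\<bar> < \<rho>" using s unfolding m_def \<rho>_def by (simp add: abs_less_iff field_simps)
  have a1: "norm a < 1" using na sm \<rho>0 by (simp add: divide_less_eq)
  have wa: "cc + of_real \<rho> * a = w" using \<rho>0 by (simp add: a_def)
  define K where "K = (1 - s) * (s - r) / \<rho>"
  have main: "norm F * K * M' \<le> M'^2 - (norm (f w))^2" if MM: "M < M'" for M'
  proof -
    have M0: "0 \<le> M" using bnd w norm_ge_zero order_trans by blast
    have M'0: "0 < M'" using MM M0 by simp
    define g where "g = (\<lambda>u. f (cc + of_real \<rho> * u) / of_real M')"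
    have holg: "g holomorphic_on ball 0 1"
      unfolding g_def f_def
      by (intro holomorphic_intros poly_hol_comp)
         (use q inA M'0 in auto)
    have glt: "norm (g u) < 1" if "norm u < 1" for u
    proof -
      have "norm (f (cc + of_real \<rho> * u)) \<le> M" using bnd inA[OF that] by (simp add: f_def)
      then show ?thesis using MM M'0 by (simp add: g_def norm_divide)
    qed
    have d1: "((\<lambda>u. cc + of_real \<rho> * u) has_field_derivative of_real \<rho>) (at a)"
      by (auto intro!: derivative_eq_intros)
    have d2: "(f has_field_derivative F) (at (cc + of_real \<rho> * a))" using dF wa by (simp add: f_def)
    have dg: "(g has_field_derivative F * of_real \<rho> / of_real M') (at a)"
      unfolding g_def using DERIV_cdivide[OF DERIV_chain'[OF d1 d2], of "of_real M'"] by simp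
    have sp: "norm (F * of_real \<rho> / of_real M') * (1 - (norm a)^2) \<le> 1 - (norm (g a))^2"
      by (rule schwarz_pick[OF holg _ a1 dg]) (use glt in auto)
    have ga: "norm (g a) = norm (f w) / M'" using wa M'0 by (simp add: g_def norm_divide)
    have e1: "norm (F * of_real \<rho> / of_real M') = norm F * \<rho> / M'" using \<rho>0 M'0 by (simp add: norm_mult norm_divide)
    have e2: "1 - (norm a)^2 = (\<rho>^2 - (s - m)^2) / \<rho>^2" using \<rho>0 by (simp add: na power_divide field_simps)
    have e3: "\<rho>^2 - (s - m)^2 = (1 - s) * (s - r)"
      unfolding m_def \<rho>_def power2_eq_square by (simp add: field_simps)
    have "norm F * \<rho> / M' * ((1 - s) * (s - r) / \<rho>^2) \<le> 1 - (norm (f w) / M')^2"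
      using sp unfolding ga e1 e2 e3 .
    then have "M'^2 * (norm F * \<rho> / M' * ((1 - s) * (s - r) / \<rho>^2)) \<le> M'^2 * (1 - (norm (f w) / M')^2)"
      using M'0 by (intro mult_left_mono) simp_all
    moreover have "M'^2 * (norm F * \<rho> / M' * ((1 - s) * (s - r) / \<rho>^2)) = norm F * K * M'"
      using M'0 \<rho>0 by (simp add: K_def power2_eq_square field_simps)
    moreover have "M'^2 * (1 - (norm (f w) / M')^2) = M'^2 - (norm (f w))^2"
      using M'0 by (simp add: power_divide field_simps)
    ultimately show ?thesis by simp
  qed
  have lim: "norm F * K * M \<le> M^2 - (norm (f w))^2"
    using limit_le[of "norm F * K" M "(norm (f w))^2"] main by (simp add: mult.assoc)
  have cK: "(1 - s^2) * (s^2 - r^2) \<le> K"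
  proof -
    have "(1 + s) * (s + r) * (1 - r) \<le> 2"
    proof -
      have "(1 + s) * (s + r) \<le> 2 * (1 + r)" using s r by (intro mult_mono) auto
      then have "(1 + s) * (s + r) * (1 - r) \<le> 2 * (1 + r) * (1 - r)" using r by (intro mult_right_mono) auto
      also have "\<dots> \<le> 2" by (simp add: algebra_simps)
      finally show ?thesis .
    qed
    then have "(1 - s) * (s - r) * ((1 + s) * (s + r) * (1 - r)) \<le> (1 - s) * (s - r) * 2"
      using s by (intro mult_left_mono) auto
    then show ?thesis using r \<rho>0 unfolding K_def \<rho>_def
      by (simp add: power2_eq_square field_simps)
  qed
  have M0: "0 \<le> M" using bnd w norm_ge_zero order_trans by blast
  have "norm F * ((1 - s^2) * (s^2 - r^2)) * M \<le> norm F * K * M"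
    using cK M0 by (intro mult_right_mono mult_left_mono) auto
  with lim show ?thesis by (simp add: s_def f_def)
qed



lemma cl_annulus_compact: "compact (cl_annulus r)"
proof -
  have "cl_annulus r = cball 0 1 - ball 0 r" by (auto simp: cl_annulus_def)
  then show ?thesis by (simp add: compact_diff)
qed

lemma cl_annulus_infinite: "0 < r \<Longrightarrow> r < 1 \<Longrightarrow> infinite (cl_annulus r)"
proof
  assume r: "0 < r" "r < 1" and fin: "finite (cl_annulus r)"
  have "complex_of_real ` {r..1} \<subseteq> cl_annulus r" using r by (auto simp: cl_annulus_def)
  then have "finite (complex_of_real ` {r..1})" using fin finite_subset by blast
  then have "finite {r..1}" using finite_imageD inj_on_def by (metis inj_of_real inj_on_subset subset_UNIV)
  with infinite_Icc[OF r(2)] show False by simp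
qed

lemma annulus_sub: "annulus r \<subseteq> cl_annulus r"
  by (auto simp: annulus_def cl_annulus_def)

lemma contraction:
  assumes r: "0 < r" "r < 1" and w: "w \<in> cl_annulus r"
  shows "annulus_contraction r (Tw r w)"
  unfolding annulus_contraction_def
proof (intro conjI allI impI)
  define c where "c = (1 - (cmod w)\<^sup>2) * ((cmod w)\<^sup>2 - r\<^sup>2)"
  have T: "Tw r w = ut w (of_real c)" by (simp add: Tw_ut c_def)
  show "mspectrum (Tw r w) \<subseteq> cl_annulus r" using mspectrum_ut w T by auto
  fix p q :: "complex poly"
  assume q: "\<forall>z\<in>cl_annulus r. poly q z \<noteq> 0"
  define f where "f = (\<lambda>z. poly p z / poly q z)"
  define M where "M = (SUP z\<in>cl_annulus r. cmod (poly p z / poly q z))"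
  have Q: "poly q w \<noteq> 0" using q w by blast
  define F where "F = (pd p w * poly q w - poly p w * pd q w) / (poly q w)^2"
  have prod: "poly_mat p (Tw r w) ** matrix_inv (poly_mat q (Tw r w)) = ut (f w) (of_real c * F)"
  proof -
    have "poly_mat p (Tw r w) ** matrix_inv (poly_mat q (Tw r w))
        = ut (poly p w) (of_real c * pd p w) ** ut (1 / poly q w) (- (of_real c * pd q w) / (poly q w)^2)"
      unfolding T poly_mat_ut ut_inv[OF Q] ..
    also have "\<dots> = ut (f w) (of_real c * F)"
      unfolding ut_mult f_def F_def using Q by (simp add: power2_eq_square field_simps)
    finally show ?thesis .
  qed
  have cont: "continuous_on (cl_annulus r) (\<lambda>z. cmod (poly p z / poly q z))"
    using q by (intro continuous_intros) auto
  have bdd: "bdd_above ((\<lambda>z. cmod (poly p z / poly q z)) ` cl_annulus r)"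
    by (intro bounded_imp_bdd_above compact_imp_bounded compact_continuous_image cont cl_annulus_compact)
  have le: "norm (f z) \<le> M" if "z \<in> cl_annulus r" for z
    unfolding M_def f_def by (rule cSUP_upper[OF that bdd])
  have fw: "norm (f w) \<le> M" using le w .
  have c0: "0 \<le> c"
  proof -
    have w1: "r \<le> cmod w" "cmod w \<le> 1" using w by (auto simp: cl_annulus_def)
    have "r^2 \<le> (cmod w)^2" using w1 r by (intro power_mono) auto
    moreover have "(cmod w)^2 \<le> 1" using w1 by (intro power_le_one) auto
    ultimately show ?thesis unfolding c_def by simp
  qed
  have key: "norm (of_real c * F) * M \<le> M^2 - (norm (f w))^2"
  proof (cases "w \<in> annulus r")
    case True
    have dF: "(f has_field_derivative F) (at w)"
      unfolding f_def F_def using DERIV_divide[OF pd_deriv pd_deriv Q, of p]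
      by (simp add: power2_eq_square)
    have "norm F * c * M \<le> M^2 - (norm (f w))^2"
      using interior_est[OF r True, of q p M F] q annulus_sub le dF
      unfolding c_def f_def by auto
    then show ?thesis using c0 by (simp add: norm_mult mult_ac)
  next
    case False
    then have "c = 0" using w unfolding c_def annulus_def cl_annulus_def by auto
    moreover have "0 \<le> M^2 - (norm (f w))^2"
      using fw by (simp add: power_mono)
    ultimately show ?thesis by simp
  qed
  have pos: "0 < M \<or> of_real c * F = 0"
  proof (cases "p = 0")
    case True
    then show ?thesis by (simp add: F_def pd_def)
  next
    case False
    have "\<exists>z\<in>cl_annulus r. poly p z \<noteq> 0"
    proof (rule ccontr)
      assume "\<not> ?thesis"
      then have "cl_annulus r \<subseteq> {x. poly p x = 0}" by auto
      with poly_roots_finite[OF False] cl_annulus_infinite[OF r] show False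
        using finite_subset by blast
    qed
    then obtain z where z: "z \<in> cl_annulus r" "poly p z \<noteq> 0" by blast
    have h: "0 < norm (f z)" using z q by (simp add: f_def)
    have "0 < M" using le[OF z(1)] h by linarith
    then show ?thesis by simp
  qed
  show "op_norm (poly_mat p (Tw r w) ** matrix_inv (poly_mat q (Tw r w)))
          \<le> (SUP z\<in>cl_annulus r. cmod (poly p z / poly q z))"
    unfolding prod M_def[symmetric]
    by (rule ut_onorm[OF fw key pos])
qed

lemma unitary:
  assumes w: "w \<in> bd_annulus r"
  shows "annulus_unitary r (Tw r w)"
proof -
  have "Tw r w = ut w 0" using w by (auto simp: Tw_ut bd_annulus_def)
  moreover have "madjoint (ut w 0) = ut (cnj w) 0" by (simp add: mat_eq_iff2 madjoint_def)
  ultimately show ?thesis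
    unfolding annulus_unitary_def using mspectrum_ut[of w 0] w
    by (auto simp: ut_mult mult.commute)
qed



lemma series_part:
  fixes r :: real and w :: complex
  assumes r: "0 < r" "r < 1" and w: "w \<in> annulus r"
  shows "(\<lambda>n::int. (cmod w) powi (2*n) / (1 + r powi (2*n))) summable_on UNIV
        \<and> (\<Sum>\<^sub>\<infinity>n::int. (cmod w) powi (2*n) / (1 + r powi (2*n)))
            \<le> 1 / ((1 - (cmod w)\<^sup>2) * ((cmod w)\<^sup>2 - r\<^sup>2))"
proof -
  define s where "s = cmod w"
  define x where "x = s^2"
  define \<rho> where "\<rho> = r^2"
  have s: "r < s" "s < 1" using w by (auto simp: annulus_def s_def)
  have s0: "0 < s" using s r by simp
  have \<rho>0: "0 < \<rho>" using r by (simp add: \<rho>_def)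
  have \<rho>x: "\<rho> < x" unfolding \<rho>_def x_def using s r by (intro power_strict_mono) auto
  have x1: "x < 1" unfolding x_def using s s0 by (simp add: power_less_one_iff)
  have x0: "0 < x" using \<rho>0 \<rho>x by simp
  define a where "a = (\<lambda>n::int. s powi (2*n) / (1 + r powi (2*n)))"
  define b where "b = (\<lambda>n::int. if 0 \<le> n then x ^ nat n else (\<rho>/x) ^ nat (-n))"
  have a0: "0 \<le> a n" for n using s0 r by (simp add: a_def)
  have ab: "a n \<le> b n" for n
  proof (cases "0 \<le> n")
    case True
    then obtain k where k: "n = int k" by (metis nonneg_eq_int)
    have "a n = x^k / (1 + \<rho>^k)"
      by (simp add: a_def k x_def \<rho>_def power_int_mult power_mult flip: of_nat_mult)
    also have "\<dots> \<le> x^k / 1"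
    proof -
      have "0 < \<rho>^k" using \<rho>0 by simp
      then show ?thesis using x0 by (intro divide_left_mono) auto
    qed
    finally show ?thesis by (simp add: b_def k)
  next
    case False
    define k where "k = nat (-n)"
    have k: "n = - int k" using False by (simp add: k_def)
    have e: "2 * n = - int (2*k)" using k by simp
    have "a n = inverse (s^(2*k)) / (1 + inverse (r^(2*k)))"
      by (simp only: a_def e power_int_minus power_int_of_nat)
    also have "\<dots> = inverse (x^k) / (1 + inverse (\<rho>^k))"
      by (simp only: x_def \<rho>_def power_mult)
    also have "\<dots> = \<rho>^k / (x^k * (\<rho>^k + 1))"
      using \<rho>0 x0 by (simp add: field_simps)
    also have "\<dots> \<le> \<rho>^k / (x^k * 1)"
    proof -
      have "0 < \<rho>^k" using \<rho>0 by simp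
      then show ?thesis using x0 by (intro divide_left_mono mult_left_mono mult_pos_pos) auto
    qed
    also have "\<dots> = b n" using False by (simp add: b_def k power_divide)
    finally show ?thesis .
  qed
  define S where "S = 1/(1-x) + (\<rho>/x) * (1 / (1 - \<rho>/x))"
  have hb: "(b has_sum S) UNIV"
  proof -
    have U: "(UNIV::int set) = range int \<union> range (\<lambda>k. - int k - 1)"
    proof -
      have "n \<in> range int \<union> range (\<lambda>k. - int k - 1)" for n :: int
      proof (cases "0 \<le> n")
        case True then show ?thesis by (metis UnI1 nonneg_eq_int rangeI)
      next
        case False
        then have "n = - int (nat (- n - 1)) - 1" by simp
        then show ?thesis by blast
      qed
      then show ?thesis by blast
    qed
    have h1: "(b has_sum 1/(1-x)) (range int)"
    proof -
      have "((\<lambda>k. x^k) sums (1/(1-x)))" using geometric_sums[of x] x0 x1 by simp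
      then have "((\<lambda>k::nat. x^k) has_sum (1/(1-x))) UNIV"
        by (rule sums_nonneg_imp_has_sum) (use x0 in simp)
      moreover have "b \<circ> int = (\<lambda>k. x^k)" by (auto simp: b_def)
      ultimately show ?thesis by (simp add: has_sum_reindex)
    qed
    have h2: "(b has_sum ((\<rho>/x) * (1 / (1 - \<rho>/x)))) (range (\<lambda>k. - int k - 1))"
    proof -
      have q1: "\<bar>\<rho>/x\<bar> < 1" using \<rho>0 \<rho>x x0 by simp
      have "((\<lambda>k. (\<rho>/x) * (\<rho>/x)^k) sums ((\<rho>/x) * (1/(1-\<rho>/x))))"
        by (intro sums_mult geometric_sums) (use q1 in simp)
      then have "((\<lambda>k::nat. (\<rho>/x) * (\<rho>/x)^k) has_sum ((\<rho>/x) * (1/(1-\<rho>/x)))) UNIV"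
        by (rule sums_nonneg_imp_has_sum) (use x0 \<rho>0 in simp)
      moreover have "b \<circ> (\<lambda>k. - int k - 1) = (\<lambda>k. (\<rho>/x) * (\<rho>/x)^k)"
        by (auto simp: b_def nat_add_distrib)
      moreover have "inj (\<lambda>k::nat. - int k - 1)" by (auto simp: inj_def)
      ultimately show ?thesis by (simp add: has_sum_reindex)
    qed
    have "(b has_sum (1/(1-x) + (\<rho>/x) * (1 / (1 - \<rho>/x)))) (range int \<union> range (\<lambda>k. - int k - 1))"
      by (rule has_sum_Un_disjoint[OF h1 h2]) auto
    then show ?thesis unfolding S_def U[symmetric] .
  qed
  have bs: "b summable_on UNIV" using hb summable_on_def by blast
  have as: "a summable_on UNIV"
    by (rule abs_summable_summable, rule Infinite_Sum.abs_summable_on_comparison_test'[OF bs]) (use a0 ab in simp)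
  have "infsum a UNIV \<le> infsum b UNIV" by (rule infsum_mono[OF as bs ab])
  also have "infsum b UNIV = S" using hb by (rule infsumI)
  also have "S \<le> 1 / ((1 - x) * (x - \<rho>))"
  proof -
    have e: "S = 1/(1-x) + \<rho>/(x-\<rho>)" using x0 \<rho>x by (simp add: S_def field_simps)
    have "x * (1 - \<rho>) \<le> 1" using x1 x0 \<rho>0 \<rho>x by (intro mult_le_one) auto
    moreover have "1/(1-x) + \<rho>/(x-\<rho>) = (x * (1 - \<rho>)) / ((1 - x) * (x - \<rho>))"
      using x1 \<rho>x by (simp add: field_simps)
    moreover have "0 < (1 - x) * (x - \<rho>)" using x1 \<rho>x by simp
    ultimately show ?thesis unfolding e by (simp add: divide_right_mono)
  qed
  finally show ?thesis using as by (simp add: a_def s_def x_def \<rho>_def)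
qed


theorem mainTheorem14:
  fixes r :: real
  assumes "0 < r" "r < 1"
  shows "(\<forall>w\<in>cl_annulus r. annulus_contraction r (Tw r w))
    \<and> (\<forall>w\<in>bd_annulus r. annulus_unitary r (Tw r w))
    \<and> (\<forall>w\<in>annulus r.
          (\<lambda>n::int. (cmod w) powi (2*n) / (1 + r powi (2*n))) summable_on UNIV
        \<and> (\<Sum>\<^sub>\<infinity>n::int. (cmod w) powi (2*n) / (1 + r powi (2*n)))
            \<le> 1 / ((1 - (cmod w)\<^sup>2) * ((cmod w)\<^sup>2 - r\<^sup>2)))"
  using contraction[OF assms] unitary series_part[OF assms] by blast

end
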